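(* Let $q$ be a prime power, $h\ge 2$, and $m>\max\{q^{h-1},hq-1\}$. Let $f(X)=\sum_{i=0}^{h-1}f_iX^{q^i}$ and $g(X)=\sum_{i=0}^{h-1}g_iX^{q^i}$ be invertible $\mathbb F_q$-linearised polynomials over $\mathbb F_{q^h}$. If $(f,g)$ satisfies property $(Prop_m)$, then $|\{i: f_i=0\}|=|\{i:g_i=0\}|\ge 1$.
   Context: An $\mathbb F_q$-linearised polynomial over $\mathbb F_{q^h}$ is $\sum_{l=0}^{h-1}a_lX^{q^l}$ with $a_l\in\mathbb F_{q^h}$, viewed as a map of $\mathbb F_{q^h}$; invertible means bijective. Identities $\equiv$ mean equality as maps. Property $(Prop_m)$: $(f,g)$ satisfies it if there exist triples $(a_j,b_j,c_j)\in(\mathbb F_{q^h}^* )^3$, $1\le j\le m$, with $(a_1,b_1,c_1)=(1,1,1)$, such that $a_jf(b_jf^{-1}(X))\equiv g(c_jg^{-1}(X))$ for every $j$, and for all $i\ne j$: $a_i\ne a_j$, $b_i\ne b_j$, $c_i\ne c_j$. *)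

theory Defs
  imports Main "HOL-Number_Theory.Prime_Powers"
begin

definition linpoly :: "nat \<Rightarrow> nat \<Rightarrow> (nat \<Rightarrow> 'a::field) \<Rightarrow> 'a \<Rightarrow> 'a" where
  "linpoly q h c x = (\<Sum>l<h. c l * x ^ (q ^ l))"

text \<open>Property (Prop_m), with the m triples indexed by j = 0..m-1
  (index 0 playing the role of j = 1 in the paper).\<close>
definition prop_m :: "nat \<Rightarrow> ('a::field \<Rightarrow> 'a) \<Rightarrow> ('a \<Rightarrow> 'a) \<Rightarrow> bool" where
  "prop_m m F G \<longleftrightarrow>
     (\<exists>a b c :: nat \<Rightarrow> 'a.
        (a 0, b 0, c 0) = (1, 1, 1) \<and>
        (\<forall>j<m. a j \<noteq> 0 \<and> b j \<noteq> 0 \<and> c j \<noteq> 0) \<and>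
        (\<forall>j<m. \<forall>x. a j * F (b j * inv F x) = G (c j * inv G x)) \<and>
        (\<forall>i<m. \<forall>j<m. i \<noteq> j \<longrightarrow> a i \<noteq> a j \<and> b i \<noteq> b j \<and> c i \<noteq> c j))"

end

theory Submission imports Defs "HOL-Number_Theory.Residues" "Jordan_Normal_Form.Char_Poly" begin

locale LP =
  fixes q h :: nat and ty :: "'a::{finite,field} itself"
  assumes q2: "q \<ge> 2" and hpos: "0 < h"
    and cardK: "card (UNIV :: 'a set) = q ^ h"
    and frobq: "\<And>x y :: 'a. (x + y) ^ q = x ^ q + y ^ q"
begin

lemma frob: "((x::'a) + y) ^ (q ^ i) = x ^ (q ^ i) + y ^ (q ^ i)"
proof (induction i)
  case (Suc i)
  have "(x + y) ^ (q ^ Suc i) = ((x + y) ^ (q ^ i)) ^ q"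
    by (simp only: power_Suc2 power_mult)
  also have "\<dots> = (x ^ (q ^ i)) ^ q + (y ^ (q ^ i)) ^ q" using Suc frobq by simp
  finally show ?case by (simp only: power_Suc2 power_mult)
qed simp

lemma frob_sum: "(\<Sum>k\<in>A. (F k :: 'a)) ^ (q ^ i) = (\<Sum>k\<in>A. F k ^ (q ^ i))"
  by (induction A rule: infinite_finite_induct) (use q2 in \<open>auto simp: frob power_0_left\<close>)

lemma pow_card: "(x::'a) ^ card (UNIV :: 'a set) = x"
proof (cases "x = 0")
  case False
  have "x * (\<Prod>y\<in>UNIV-{0}. x * y) = x * x ^ (card (UNIV :: 'a set) - 1) * \<Prod>(UNIV-{0})"
    by (simp add: prod.distrib mult_ac)
  also have "x * x ^ (card (UNIV :: 'a set) - 1) = x ^ Suc (card (UNIV :: 'a set) - 1)"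
    by (subst power_Suc) auto
  also have "Suc (card (UNIV :: 'a set) - 1) = card (UNIV :: 'a set)"
    using finite_UNIV_card_ge_0[where ?'a = 'a] by simp
  also have "(\<Prod>y\<in>UNIV-{0}. x * y) = (\<Prod>y\<in>UNIV-{0}. y)"
    by (rule prod.reindex_bij_witness[of _ "\<lambda>y. y / x" "\<lambda>y. x * y"]) (use False in auto)
  finally show ?thesis
    by simp
qed (use finite_UNIV_card_ge_0[where ?'a = 'a] in auto)

lemma pow_qh: "(x::'a) ^ (q ^ h) = x"
  using pow_card cardK by simp

lemma pow_qht: "(x::'a) ^ (q ^ (h * t)) = x"
proof (induction t)
  case (Suc t)
  have "x ^ (q ^ (h * Suc t)) = (x ^ (q ^ (h * t))) ^ (q ^ h)"
  proof -
    have "h * Suc t = h * t + h" by simp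
    then show ?thesis by (simp only: power_add power_mult)
  qed
  then show ?case using Suc pow_qh by simp
qed simp

lemma pow_mod: "(x::'a) ^ (q ^ i) = x ^ (q ^ (i mod h))"
proof -
  have "i = h * (i div h) + i mod h" by simp
  then have "x ^ (q ^ i) = x ^ (q ^ (h * (i div h) + i mod h))" by simp
  also have "\<dots> = (x ^ (q ^ (h * (i div h)))) ^ (q ^ (i mod h))"
    by (simp only: power_add power_mult)
  finally have "x ^ (q ^ i) = (x ^ (q ^ (h * (i div h)))) ^ (q ^ (i mod h))" .
  then show ?thesis using pow_qht by simp
qed

lemma q_pos: "q > 0" using q2 by simp

definition lcomp :: "(nat \<Rightarrow> 'a) \<Rightarrow> (nat \<Rightarrow> 'a) \<Rightarrow> nat \<Rightarrow> 'a" where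
  "lcomp c d s = (\<Sum>k<h. c k * d ((s + h - k) mod h) ^ (q ^ k))"

lemma rot_inv1: "k < h \<Longrightarrow> j < h \<Longrightarrow> ((j + k) mod h + h - k) mod h = j"
proof -
  assume "k < h" "j < h"
  have "((j + k) mod h + h - k) mod h = ((j + k) mod h + (h - k)) mod h"
    using \<open>k<h\<close> by simp
  also have "\<dots> = (j + k + (h - k)) mod h" by (simp add: mod_add_left_eq)
  also have "j + k + (h - k) = j + h" using \<open>k<h\<close> by simp
  finally show ?thesis using \<open>j<h\<close> by simp
qed

lemma rot_inv2: "k < h \<Longrightarrow> s < h \<Longrightarrow> ((s + h - k) mod h + k) mod h = s"
proof -
  assume "k < h" "s < h"
  have "((s + h - k) mod h + k) mod h = (s + h - k + k) mod h" by (simp add: mod_add_left_eq)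
  also have "s + h - k + k = s + h" using \<open>k<h\<close> by simp
  finally show ?thesis using \<open>s<h\<close> by simp
qed

lemma sum_rot:
  assumes "k < h"
  shows "(\<Sum>j<h. F j ((j + k) mod h)) = (\<Sum>s<h. F ((s + h - k) mod h) s)"
  by (rule sum.reindex_bij_witness[of _ "\<lambda>s. (s + h - k) mod h" "\<lambda>j. (j + k) mod h"])
     (use assms rot_inv1 rot_inv2 hpos in auto)


lemma linpoly_comp:
  "linpoly q h c (linpoly q h d x) = linpoly q h (lcomp c d) x"
proof -
  have "linpoly q h c (linpoly q h d x) = (\<Sum>k<h. c k * (\<Sum>j<h. d j * x ^ (q ^ j)) ^ (q ^ k))"
    by (simp add: linpoly_def)
  also have "\<dots> = (\<Sum>k<h. \<Sum>j<h. c k * d j ^ (q ^ k) * x ^ (q ^ ((j + k) mod h)))"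
  proof (intro sum.cong refl)
    fix k assume "k \<in> {..<h}"
    have "(\<Sum>j<h. d j * x ^ (q ^ j)) ^ (q ^ k) = (\<Sum>j<h. d j ^ (q ^ k) * x ^ (q ^ (j + k)))"
      by (simp add: frob_sum power_mult_distrib power_add power_mult)
    also have "\<dots> = (\<Sum>j<h. d j ^ (q ^ k) * x ^ (q ^ ((j + k) mod h)))"
      using pow_mod by simp
    finally show "c k * (\<Sum>j<h. d j * x ^ (q ^ j)) ^ (q ^ k) = (\<Sum>j<h. c k * d j ^ (q ^ k) * x ^ (q ^ ((j + k) mod h)))"
      by (simp add: sum_distrib_left mult.assoc)
  qed
  also have "\<dots> = (\<Sum>k<h. \<Sum>s<h. c k * d ((s + h - k) mod h) ^ (q ^ k) * x ^ (q ^ s))"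
  proof (rule sum.cong[OF refl])
    fix k assume "k \<in> {..<h}"
    then have kh: "k < h" by simp
    show "(\<Sum>j<h. c k * d j ^ (q ^ k) * x ^ (q ^ ((j + k) mod h))) = (\<Sum>s<h. c k * d ((s + h - k) mod h) ^ (q ^ k) * x ^ (q ^ s))"
      using sum_rot[OF kh, of "\<lambda>j s. c k * d j ^ (q ^ k) * x ^ (q ^ s)"] by (simp only:)
  qed
  also have "\<dots> = (\<Sum>s<h. \<Sum>k<h. c k * d ((s + h - k) mod h) ^ (q ^ k) * x ^ (q ^ s))"
    by (rule sum.swap)
  also have "\<dots> = linpoly q h (lcomp c d) x"
    by (simp add: linpoly_def lcomp_def sum_distrib_right)
  finally show ?thesis .
qed

lemma linpoly_zero:
  fixes c :: "nat \<Rightarrow> 'a" and A :: "'a set"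
  assumes cA: "card A > q ^ (h - 1)" and z: "\<forall>x\<in>A. linpoly q h c x = 0" and i: "i < h"
  shows "c i = 0"
proof (rule ccontr)
  assume ci: "c i \<noteq> 0"
  define P where "P = (\<Sum>k<h. monom (c k) (q ^ k))"
  have polyP: "poly P x = linpoly q h c x" for x
    by (simp add: P_def linpoly_def poly_sum poly_monom)
  have qinj: "q ^ k = q ^ i \<longleftrightarrow> k = i" for k
    using q2 by (simp add: power_inject_exp)
  have "coeff P (q ^ i) = (\<Sum>k<h. if q ^ k = q ^ i then c k else 0)"
    by (simp add: P_def coeff_sum coeff_monom)
  also have "\<dots> = (\<Sum>k<h. if k = i then c k else 0)"
    using qinj by simp
  also have "\<dots> = c i" using i by simp
  finally have cP: "coeff P (q ^ i) = c i" .
  have "degree P \<le> q ^ (h - 1)"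
  proof (rule degree_le, intro allI impI)
    fix n assume n: "q ^ (h - 1) < n"
    have "q ^ k \<noteq> n" if "k < h" for k
    proof -
      have "q ^ k \<le> q ^ (h - 1)" using that q2 by (intro power_increasing) auto
      then show ?thesis using n by simp
    qed
    then show "coeff P n = 0" by (simp add: P_def coeff_sum coeff_monom)
  qed
  moreover have "P \<noteq> 0" using cP ci by auto
  then have "card {x. poly P x = 0} \<le> degree P" by (rule card_poly_roots_bound)
  moreover have "A \<subseteq> {x. poly P x = 0}" using z polyP by auto
  then have "card A \<le> card {x. poly P x = 0}"
    by (intro card_mono) (auto intro: finite_subset[OF subset_UNIV finite_class.finite_UNIV])
  ultimately show False using cA by linarith
qed

lemma card_gt: "card (UNIV :: 'a set) > q ^ (h - 1)"
  using cardK q2 hpos by (simp add: power_strict_increasing)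

lemma linpoly_unique:
  fixes c d :: "nat \<Rightarrow> 'a"
  assumes "\<And>x. linpoly q h c x = linpoly q h d x" "i < h"
  shows "c i = d i"
proof -
  have "\<forall>x\<in>UNIV. linpoly q h (\<lambda>k. c k - d k) x = 0"
    using assms(1) by (simp add: linpoly_def left_diff_distrib sum_subtractf)
  from linpoly_zero[OF card_gt this assms(2)] show ?thesis by simp
qed

lemma linpoly_scale_arg: "linpoly q h c (b * x) = linpoly q h (\<lambda>s. c s * b ^ (q ^ s)) x"
  by (simp add: linpoly_def power_mult_distrib mult.assoc)

lemma linpoly_scale: "a * linpoly q h c x = linpoly q h (\<lambda>s. a * c s) x"
  by (simp add: linpoly_def sum_distrib_left mult.assoc)

definition dl :: "nat \<Rightarrow> 'a" where "dl s = (if s = 0 then 1 else 0)"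

lemma linpoly_id: "linpoly q h dl x = x"
proof -
  have "linpoly q h dl x = (\<Sum>k<h. if k = 0 then x ^ (q ^ k) else 0)"
    unfolding linpoly_def dl_def by (intro sum.cong) auto
  also have "\<dots> = x" using hpos by simp
  finally show ?thesis .
qed

lemma funpow_lin: fixes c :: "nat \<Rightarrow> 'a" shows "\<exists>r. \<forall>x. (linpoly q h c ^^ n) x = linpoly q h r x"
proof (induction n)
  case 0
  show ?case by (rule exI[where x=dl]) (simp add: linpoly_id)
next
  case (Suc n)
  then obtain r where r: "\<forall>x. (linpoly q h c ^^ n) x = linpoly q h r x" by blast
  show ?case by (intro exI[of _ "lcomp c r"]) (simp add: r linpoly_comp)
qed

lemma inv_lin:
  fixes c :: "nat \<Rightarrow> 'a"
  assumes bF: "bij (linpoly q h c)"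
  shows "\<exists>r. \<forall>x. inv_into UNIV (linpoly q h c) x = linpoly q h r x"
proof -
  define F where "F = linpoly q h c"
  have "finite (range (\<lambda>n::nat. F ^^ n))" by (rule finite_subset[OF subset_UNIV finite_class.finite_UNIV])
  then have "\<not> inj (\<lambda>n::nat. F ^^ n)" using range_inj_infinite by blast
  then obtain i j :: nat where ij: "i < j" "F ^^ i = F ^^ j"
    unfolding inj_def by (metis linorder_neqE_nat)
  have injF: "inj F" using bF bij_is_inj F_def by blast
  have "F ^^ j = F ^^ i \<circ> F ^^ (j - i)"
    using ij(1) by (simp flip: funpow_add)
  then have "(F ^^ i) ((F ^^ (j - i)) x) = (F ^^ i) x" for x
    using ij(2) by (metis comp_apply)
  then have idd: "(F ^^ (j - i)) x = x" for x
    using inj_fn[OF injF, of i] by (meson injD)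
  obtain d where d: "j - i = Suc d" using ij(1) by (metis Suc_diff_Suc)
  have "F ((F ^^ d) x) = x" for x using idd[of x] d by simp
  then have "inv_into UNIV F x = (F ^^ d) x" for x
    by (metis injF inv_f_f)
  moreover obtain r where "\<forall>x. (F ^^ d) x = linpoly q h r x"
    using funpow_lin F_def by blast
  ultimately show ?thesis unfolding F_def by auto
qed


definition ms :: "nat \<Rightarrow> nat \<Rightarrow> nat" where "ms a b = (a + h - b) mod h"

lemma ms_lt: "ms a b < h" using hpos by (simp add: ms_def)

lemma ms_add: "b < h \<Longrightarrow> a < h \<Longrightarrow> (ms a b + b) mod h = a"
  using rot_inv2 by (simp add: ms_def)

lemma ms_add': "b < h \<Longrightarrow> a < h \<Longrightarrow> ms ((a + b) mod h) b = a"
  using rot_inv1 by (simp add: ms_def)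

lemma ms_uniq: "z < h \<Longrightarrow> k < h \<Longrightarrow> (z + k) mod h = i \<Longrightarrow> z = ms i k"
  using ms_add' by auto

lemma ms_ms: assumes "s < h" "t < h" shows "ms s (ms s t) = t"
proof -
  have "(t + ms s t) mod h = s" using ms_add[OF assms(2,1)] by (simp add: add.commute)
  moreover have "ms ((t + ms s t) mod h) (ms s t) = t" by (rule ms_add'[OF ms_lt assms(2)])
  ultimately show ?thesis by simp
qed

lemma ms_ms2: assumes "i < h" "k < h" "s < h" shows "ms (ms i k) (ms s k) = ms i s"
proof -
  have "((ms i s + ms s k) mod h + k) mod h = (ms i s + (ms s k + k)) mod h"
    by (simp add: mod_add_left_eq add.assoc)
  also have "\<dots> = (ms i s + (ms s k + k) mod h) mod h" by (simp add: mod_add_right_eq)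
  also have "\<dots> = i" using ms_add assms by simp
  finally have "(ms i s + ms s k) mod h = ms i k"
    using ms_uniq[of "(ms i s + ms s k) mod h" k i] assms hpos by simp
  then show ?thesis using ms_add'[OF ms_lt ms_lt, of i s s k] by simp
qed

end

locale LP2 = LP q h ty for q h :: nat and ty :: "'a::{finite,field} itself" +
  fixes f g :: "nat \<Rightarrow> 'a"
  assumes bF: "bij (linpoly q h f)" and bG: "bij (linpoly q h g)"
begin

definition rF where "rF = (SOME r. \<forall>x. inv_into UNIV (linpoly q h f) x = linpoly q h r x)"
definition rG where "rG = (SOME r. \<forall>x. inv_into UNIV (linpoly q h g) x = linpoly q h r x)"

lemma rF: "inv_into UNIV (linpoly q h f) x = linpoly q h rF x"
  using someI_ex[OF inv_lin[OF bF]] unfolding rF_def by blast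
lemma rG: "inv_into UNIV (linpoly q h g) x = linpoly q h rG x"
  using someI_ex[OF inv_lin[OF bG]] unfolding rG_def by blast

definition nA where "nA = lcomp rF g"
definition nB where "nB = lcomp rG f"

lemma nA: "linpoly q h nA y = inv_into UNIV (linpoly q h f) (linpoly q h g y)"
  by (simp add: nA_def rF flip: linpoly_comp)
lemma nB: "linpoly q h nB y = inv_into UNIV (linpoly q h g) (linpoly q h f y)"
  by (simp add: nB_def rG flip: linpoly_comp)

lemma FN: "linpoly q h f (linpoly q h nA y) = linpoly q h g y"
  using nA bF by (simp add: bij_is_surj surj_f_inv_f)

lemma NN: "linpoly q h nA (linpoly q h nB y) = y"
  using nA nB bF bG by (simp add: bij_is_surj surj_f_inv_f bij_is_inj inv_f_f)

lemma nn_comp: "s < h \<Longrightarrow> lcomp nA nB s = dl s"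
  by (rule linpoly_unique) (simp_all add: NN linpoly_id flip: linpoly_comp)

lemma nA_nz: "\<exists>t<h. nA t \<noteq> 0"
proof (rule ccontr)
  assume "\<not> (\<exists>t<h. nA t \<noteq> 0)"
  then have "linpoly q h nA y = 0" for y by (simp add: linpoly_def)
  then have "(1::'a) = 0" using NN[of 1] by simp
  then show False by simp
qed

definition Qc where "Qc s k = f k * nA (ms s k) ^ (q ^ k)"

lemma key:
  assumes tr: "\<forall>x. a * linpoly q h f (b * inv_into UNIV (linpoly q h f) x)
                  = linpoly q h g (c * inv_into UNIV (linpoly q h g) x)"
    and s: "s < h"
  shows "a * linpoly q h (Qc s) b = g s * c ^ (q ^ s)"
proof -
  have "a * linpoly q h f (b * linpoly q h nA y) = linpoly q h g (c * y)" for y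
    using tr[rule_format, of "linpoly q h g y"] bG by (simp add: nA bij_is_inj inv_f_f)
  then have "a * linpoly q h (lcomp (\<lambda>s. f s * b ^ (q ^ s)) nA) y = linpoly q h (\<lambda>s. g s * c ^ (q ^ s)) y" for y
    by (simp add: linpoly_scale_arg linpoly_comp)
  then have "linpoly q h (\<lambda>s. a * lcomp (\<lambda>s. f s * b ^ (q ^ s)) nA s) y = linpoly q h (\<lambda>s. g s * c ^ (q ^ s)) y" for y
    by (simp only: linpoly_scale[symmetric])
  from linpoly_unique[OF this s] have "a * lcomp (\<lambda>s. f s * b ^ (q ^ s)) nA s = g s * c ^ (q ^ s)" .
  moreover have "lcomp (\<lambda>s. f s * b ^ (q ^ s)) nA s = linpoly q h (Qc s) b"
    unfolding lcomp_def linpoly_def Qc_def ms_def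
    by (rule sum.cong[OF refl]) (simp only: mult.assoc mult.commute mult.left_commute)
  ultimately show ?thesis by simp
qed

lemma g_eq: "s < h \<Longrightarrow> g s = linpoly q h (Qc s) 1"
  using key[of 1 1 1 s] bF bG by (simp add: bij_is_surj surj_f_inv_f)

lemma zeros_le:
  assumes m: "q ^ (h - 1) < m" and injb: "inj_on b {..<m}" and a0: "\<forall>j<m. a j \<noteq> 0"
    and tr: "\<forall>j<m. \<forall>x. a j * linpoly q h f (b j * inv_into UNIV (linpoly q h f) x)
                  = linpoly q h g (c j * inv_into UNIV (linpoly q h g) x)"
  shows "card {i. i < h \<and> g i = 0} \<le> card {i. i < h \<and> f i = 0}"
proof -
  obtain t where t: "t < h" "nA t \<noteq> 0" using nA_nz by blast
  have sub: "(\<lambda>s. ms s t) ` {i. i < h \<and> g i = 0} \<subseteq> {i. i < h \<and> f i = 0}"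
  proof
    fix k assume "k \<in> (\<lambda>s. ms s t) ` {i. i < h \<and> g i = 0}"
    then obtain s where s: "s < h" "g s = 0" "k = ms s t" by blast
    have "linpoly q h (Qc s) (b j) = 0" if "j < m" for j
    proof -
      have "\<forall>x. a j * linpoly q h f (b j * inv_into UNIV (linpoly q h f) x)
                  = linpoly q h g (c j * inv_into UNIV (linpoly q h g) x)"
        by (intro allI tr[rule_format] that)
      from key[OF this s(1)] s(2) a0 that show ?thesis by simp
    qed
    then have "\<forall>x\<in>b ` {..<m}. linpoly q h (Qc s) x = 0" by auto
    moreover have "card (b ` {..<m}) = m" using injb by (simp add: card_image)
    ultimately have "Qc s (ms s t) = 0"
      using linpoly_zero[of "b ` {..<m}" "Qc s" "ms s t", OF _ _ ms_lt] m by presburger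
    then have "Qc s k = 0" using s(3) by simp
    moreover have "ms s k = t" using s(3) ms_ms[OF s(1) t(1)] by simp
    ultimately have "f k = 0" using t(2) by (simp add: Qc_def)
    then show "k \<in> {i. i < h \<and> f i = 0}" using s(3) ms_lt by simp
  qed
  have "inj_on (\<lambda>s. ms s t) {i. i < h \<and> g i = 0}"
  proof (rule inj_onI)
    fix x y assume "x \<in> {i. i < h \<and> g i = 0}" "y \<in> {i. i < h \<and> g i = 0}" "ms x t = ms y t"
    then have "x < h" "y < h" "ms x t = ms y t" by auto
    then have "x = (ms y t + t) mod h" using ms_add[OF t(1), of x] by simp
    then show "x = y" using ms_add[OF t(1), of y] \<open>y < h\<close> by simp
  qed
  then have "card {i. i < h \<and> g i = 0} = card ((\<lambda>s. ms s t) ` {i. i < h \<and> g i = 0})"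
    by (simp add: card_image)
  also have "\<dots> \<le> card {i. i < h \<and> f i = 0}" by (rule card_mono[OF _ sub]) simp
  finally show ?thesis .
qed


lemma mv: "t < n \<Longrightarrow> (mat n n F *\<^sub>v vec n G) $ t = (\<Sum>k<n. F (t, k) * G k)"
  by (simp add: scalar_prod_def atLeast0LessThan)

lemma mm: "i < n \<Longrightarrow> k < n \<Longrightarrow> (mat n n F * mat n n G) $$ (i, k) = (\<Sum>s<n. F (i, s) * G (s, k))"
  by (simp add: scalar_prod_def atLeast0LessThan)

end

locale LP3 = LP2 q h ty f g for q h :: nat and ty :: "'a::{finite,field} itself" and f g +
  assumes fz: "\<And>k. k < h \<Longrightarrow> f k \<noteq> 0" and gz: "\<And>k. k < h \<Longrightarrow> g k \<noteq> 0" and h2: "1 < h"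
begin

definition pr where "pr t = ms t 1"

lemma pr_lt: "pr t < h" by (simp add: pr_def ms_lt)

lemma pr_suc: "t < h \<Longrightarrow> (pr t + 1) mod h = t"
  using ms_add[OF h2] by (simp add: pr_def)

lemma rel:
  assumes tr: "\<forall>x. a * linpoly q h f (b * inv_into UNIV (linpoly q h f) x)
                  = linpoly q h g (c * inv_into UNIV (linpoly q h g) x)"
    and a0: "a \<noteq> 0" and t: "t < h"
  shows "linpoly q h (Qc t) b = a ^ (q - 1) * (g t / g (pr t) ^ q) * (linpoly q h (Qc (pr t)) b) ^ q"
proof -
  define s where "s = pr t"
  have s: "s < h" using pr_lt s_def by simp
  have k1: "a * linpoly q h (Qc t) b = g t * c ^ (q ^ t)" by (rule key[OF tr t])
  have k2: "a * linpoly q h (Qc s) b = g s * c ^ (q ^ s)" by (rule key[OF tr s])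
  have "c ^ (q ^ t) = c ^ (q ^ ((s + 1) mod h))" using pr_suc[OF t] s_def by simp
  also have "\<dots> = c ^ (q ^ Suc s)" using pow_mod[of c "Suc s"] by simp
  also have "\<dots> = (c ^ (q ^ s)) ^ q" by (simp only: power_Suc2 power_mult)
  finally have ct: "c ^ (q ^ t) = (c ^ (q ^ s)) ^ q" .
  have "(a * linpoly q h (Qc s) b) ^ q = g s ^ q * c ^ (q ^ t)"
    using k2 ct by (simp add: power_mult_distrib)
  then have "a ^ q * (linpoly q h (Qc s) b) ^ q = g s ^ q * c ^ (q ^ t)"
    by (simp add: power_mult_distrib)
  moreover have "a ^ q = a * a ^ (q - 1)" using q2 by (simp add: power_eq_if)
  ultimately have e1: "a * (a ^ (q - 1) * (linpoly q h (Qc s) b) ^ q) = g s ^ q * c ^ (q ^ t)"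
    by (simp add: mult.assoc)
  have gs: "g s ^ q \<noteq> 0" using gz[OF s] by simp
  have "a * linpoly q h (Qc t) b = a * (a ^ (q - 1) * (g t / g s ^ q) * (linpoly q h (Qc s) b) ^ q)"
    using k1 e1 gs by (simp add: field_simps)
  then have "linpoly q h (Qc t) b = a ^ (q - 1) * (g t / g s ^ q) * (linpoly q h (Qc s) b) ^ q"
    using a0 by (metis mult_left_cancel)
  then show ?thesis using s_def by simp
qed

definition Zc where "Zc s k = (Qc s (ms k 1)) ^ q"

lemma vq: "(linpoly q h (Qc s) b) ^ q = (\<Sum>k<h. Zc s k * b ^ (q ^ k))"
proof -
  have "(linpoly q h (Qc s) b) ^ q = (linpoly q h (Qc s) b) ^ (q ^ 1)" by simp
  also have "\<dots> = (\<Sum>j<h. Qc s j ^ q * b ^ (q ^ Suc j))"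
    unfolding linpoly_def frob_sum by (simp add: power_mult_distrib power_mult[symmetric] mult.commute)
  also have "\<dots> = (\<Sum>j<h. Qc s j ^ q * b ^ (q ^ ((j + 1) mod h)))"
    using pow_mod by (metis Suc_eq_plus1)
  also have "\<dots> = (\<Sum>k<h. Qc s (ms k 1) ^ q * b ^ (q ^ k))"
    using sum_rot[OF h2, of "\<lambda>j k. Qc s j ^ q * b ^ (q ^ k)"] by (simp add: ms_def)
  finally show ?thesis by (simp add: Zc_def)
qed

definition Qm :: "'a mat" where "Qm = mat h h (\<lambda>(t, k). Qc t k)"
definition Rm :: "'a mat" where "Rm = mat h h (\<lambda>(t, k). g t / g (pr t) ^ q * Zc (pr t) k)"
definition Qi :: "'a mat" where "Qi = mat h h (\<lambda>(i, s). inverse (f i) * nB (ms i s) ^ (q ^ s))"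
definition Mm :: "'a mat" where "Mm = Qi * Rm"
definition Bv :: "'a \<Rightarrow> 'a vec" where "Bv b = vec h (\<lambda>k. b ^ (q ^ k))"

lemma ms_zero: "i < h \<Longrightarrow> k < h \<Longrightarrow> ms i k = 0 \<longleftrightarrow> i = k"
  using ms_add[of k i] by (auto simp: ms_def)

lemma inner_sum:
  assumes i: "i < h" and k: "k < h"
  shows "(\<Sum>s<h. nB (ms i s) ^ (q ^ s) * nA (ms s k) ^ (q ^ k)) = (if i = k then 1 else 0)"
proof -
  define t0 where "t0 = ms i k"
  have t0: "t0 < h" using ms_lt t0_def by simp
  have "(lcomp nA nB t0) ^ (q ^ k) = (\<Sum>j<h. nA j ^ (q ^ k) * nB (ms t0 j) ^ (q ^ (j + k)))"
    unfolding lcomp_def frob_sum ms_def by (simp add: power_mult_distrib power_add power_mult)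
  also have "\<dots> = (\<Sum>j<h. nA j ^ (q ^ k) * nB (ms t0 j) ^ (q ^ ((j + k) mod h)))"
    using pow_mod by metis
  also have "\<dots> = (\<Sum>s<h. nA (ms s k) ^ (q ^ k) * nB (ms t0 (ms s k)) ^ (q ^ s))"
    using sum_rot[OF k, of "\<lambda>j s. nA j ^ (q ^ k) * nB (ms t0 j) ^ (q ^ s)"] by (simp add: ms_def)
  also have "\<dots> = (\<Sum>s<h. nB (ms i s) ^ (q ^ s) * nA (ms s k) ^ (q ^ k))"
    by (rule sum.cong[OF refl]) (simp add: t0_def ms_ms2 i k mult.commute)
  finally have "(\<Sum>s<h. nB (ms i s) ^ (q ^ s) * nA (ms s k) ^ (q ^ k)) = dl t0 ^ (q ^ k)"
    using nn_comp[OF t0] by simp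
  also have "\<dots> = (if i = k then 1 else 0)"
    using ms_zero[OF i k] q2 by (simp add: dl_def t0_def)
  finally show ?thesis .
qed

lemma QiQm: "Qi * Qm = 1\<^sub>m h"
proof (rule eq_matI)
  fix i k assume "i < dim_row (1\<^sub>m h :: 'a mat)" "k < dim_col (1\<^sub>m h :: 'a mat)"
  then have i: "i < h" and k: "k < h" by auto
  have "(Qi * Qm) $$ (i, k) = (\<Sum>s<h. inverse (f i) * nB (ms i s) ^ (q ^ s) * (f k * nA (ms s k) ^ (q ^ k)))"
    unfolding Qi_def Qm_def mm[OF i k] by (simp add: Qc_def)
  also have "\<dots> = inverse (f i) * f k * (\<Sum>s<h. nB (ms i s) ^ (q ^ s) * nA (ms s k) ^ (q ^ k))"
    by (simp add: sum_distrib_left mult_ac)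
  also have "\<dots> = 1\<^sub>m h $$ (i, k)"
    using inner_sum[OF i k] fz[OF k] i k by simp
  finally show "(Qi * Qm) $$ (i, k) = 1\<^sub>m h $$ (i, k)" .
qed (auto simp: Qi_def Qm_def)

lemma eig:
  assumes tr: "\<forall>x. a * linpoly q h f (b * inv_into UNIV (linpoly q h f) x)
                  = linpoly q h g (c * inv_into UNIV (linpoly q h g) x)"
    and a0: "a \<noteq> 0"
  shows "Mm *\<^sub>v Bv b = inverse (a ^ (q - 1)) \<cdot>\<^sub>v Bv b"
proof -
  define u where "u = a ^ (q - 1)"
  have u0: "u \<noteq> 0" using a0 u_def by simp
  have QB: "Qm *\<^sub>v Bv b = u \<cdot>\<^sub>v (Rm *\<^sub>v Bv b)"
  proof (rule eq_vecI)
    fix t assume "t < dim_vec (u \<cdot>\<^sub>v (Rm *\<^sub>v Bv b))"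
    then have t: "t < h" by (simp add: Rm_def)
    have "(Qm *\<^sub>v Bv b) $ t = linpoly q h (Qc t) b"
      unfolding Qm_def Bv_def mv[OF t] by (simp add: linpoly_def)
    also have "\<dots> = u * (g t / g (pr t) ^ q * (\<Sum>k<h. Zc (pr t) k * b ^ (q ^ k)))"
      using rel[OF tr a0 t] vq u_def by (simp add: mult.assoc)
    also have "\<dots> = u * (Rm *\<^sub>v Bv b) $ t"
      unfolding Rm_def Bv_def mv[OF t] by (simp add: sum_distrib_left mult.assoc)
    also have "\<dots> = (u \<cdot>\<^sub>v (Rm *\<^sub>v Bv b)) $ t" using t by (simp add: Rm_def)
    finally show "(Qm *\<^sub>v Bv b) $ t = (u \<cdot>\<^sub>v (Rm *\<^sub>v Bv b)) $ t" .
  qed (simp add: Qm_def Rm_def)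
  have cQi: "Qi \<in> carrier_mat h h" and cQm: "Qm \<in> carrier_mat h h" and cRm: "Rm \<in> carrier_mat h h"
    and cB: "Bv b \<in> carrier_vec h"
    by (simp_all add: Qi_def Qm_def Rm_def Bv_def)
  have "Bv b = (Qi * Qm) *\<^sub>v Bv b" using QiQm cB by simp
  also have "\<dots> = Qi *\<^sub>v (Qm *\<^sub>v Bv b)" using cQi cQm cB by simp
  also have "\<dots> = u \<cdot>\<^sub>v (Qi *\<^sub>v (Rm *\<^sub>v Bv b))"
    unfolding QB by (rule mult_mat_vec[OF cQi]) (use cRm cB in simp)
  also have "Qi *\<^sub>v (Rm *\<^sub>v Bv b) = Mm *\<^sub>v Bv b"
    unfolding Mm_def using cQi cRm cB by simp
  finally have "inverse u \<cdot>\<^sub>v Bv b = inverse u \<cdot>\<^sub>v (u \<cdot>\<^sub>v (Mm *\<^sub>v Bv b))" by simp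
  also have "\<dots> = Mm *\<^sub>v Bv b" using u0 by (simp add: smult_smult_assoc)
  finally show ?thesis unfolding u_def by simp
qed


lemma fiber_bound:
  fixes A :: "'a set" and w :: 'a
  assumes "\<forall>x\<in>A. x ^ (q - 1) = w"
  shows "card A \<le> q - 1"
proof -
  define P where "P = monom (1::'a) (q - 1) - [:w:]"
  have q1: "q - 1 \<noteq> 0" using q2 by simp
  have "coeff [:w:] (q - 1) = 0" using q1 by (cases "q - 1") simp_all
  then have cP: "coeff P (q - 1) = 1" by (simp add: P_def coeff_monom)
  then have "P \<noteq> 0" by auto
  then have "card {x. poly P x = 0} \<le> degree P" by (rule card_poly_roots_bound)
  moreover have "degree P \<le> q - 1"
    by (rule degree_le) (auto simp: P_def coeff_monom coeff_pCons split: nat.split)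
  moreover have "A \<subseteq> {x. poly P x = 0}" using assms by (auto simp: P_def poly_monom)
  then have "card A \<le> card {x. poly P x = 0}"
    by (intro card_mono) (auto intro: finite_subset[OF subset_UNIV finite_class.finite_UNIV])
  ultimately show ?thesis by linarith
qed

lemma count_bound:
  assumes inja: "inj_on a {..<m}" and a0: "\<forall>j<m. a j \<noteq> 0" and b0: "\<forall>j<m. b j \<noteq> 0"
    and tr: "\<forall>j<m. \<forall>x. a j * linpoly q h f (b j * inv_into UNIV (linpoly q h f) x)
                  = linpoly q h g (c j * inv_into UNIV (linpoly q h g) x)"
  shows "m \<le> h * (q - 1)"
proof -
  define R where "R = {x. poly (char_poly Mm) x = 0}"
  define w where "w j = inverse (a j ^ (q - 1))" for j
  have cM: "Mm \<in> carrier_mat h h"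
    unfolding Mm_def by (rule mult_carrier_mat[of _ h h _ h]) (simp_all add: Qi_def Rm_def)
  have wR: "w j \<in> R" if j: "j < m" for j
  proof -
    have trj: "\<forall>x. a j * linpoly q h f (b j * inv_into UNIV (linpoly q h f) x)
                  = linpoly q h g (c j * inv_into UNIV (linpoly q h g) x)"
      by (intro allI tr[rule_format] j)
    have e: "Mm *\<^sub>v Bv (b j) = w j \<cdot>\<^sub>v Bv (b j)" unfolding w_def by (rule eig[OF trj]) (use a0 j in simp)
    have "Bv (b j) $ 0 = b j" using hpos by (simp add: Bv_def)
    then have "Bv (b j) \<noteq> 0\<^sub>v h" using b0 j hpos by auto
    then have "eigenvector Mm (Bv (b j)) (w j)"
      unfolding eigenvector_def using e cM by (simp add: Bv_def)
    then have "eigenvalue Mm (w j)" unfolding eigenvalue_def by blast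
    then show ?thesis unfolding R_def using eigenvalue_root_char_poly[OF cM] by simp
  qed
  have dM: "degree (char_poly Mm) = h \<and> coeff (char_poly Mm) h = 1"
    by (rule degree_monic_char_poly[OF cM])
  then have "char_poly Mm \<noteq> 0" by auto
  then have cR: "card R \<le> h" unfolding R_def using card_poly_roots_bound dM by fastforce
  have fR: "finite R" by (rule finite_subset[OF subset_UNIV finite_class.finite_UNIV])
  have "{..<m} = (\<Union>x\<in>R. {j. j < m \<and> w j = x})" using wR by auto
  then have "card {..<m} \<le> (\<Sum>x\<in>R. card {j. j < m \<and> w j = x})"
    using card_UN_le[OF fR, of "\<lambda>x. {j. j < m \<and> w j = x}"] by simp
  also have "\<dots> \<le> (\<Sum>x\<in>R. q - 1)"
  proof (rule sum_mono)
    fix x assume "x \<in> R"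
    have sub: "{j. j < m \<and> w j = x} \<subseteq> {..<m}" by auto
    have "card {j. j < m \<and> w j = x} = card (a ` {j. j < m \<and> w j = x})"
      using inj_on_subset[OF inja sub] by (simp add: card_image)
    also have "\<dots> \<le> q - 1"
      by (rule fiber_bound[of _ "inverse x"]) (auto simp: w_def)
    finally show "card {j. j < m \<and> w j = x} \<le> q - 1" .
  qed
  also have "\<dots> = card R * (q - 1)" by simp
  also have "\<dots> \<le> h * (q - 1)" using cR by simp
  finally show ?thesis by simp
qed

end

theorem lemma5p12:
  fixes q h m :: nat and f g :: "nat \<Rightarrow> 'a::{finite,field}"
  assumes "primepow q"
    and "card (UNIV :: 'a set) = q ^ h"
    and "h \<ge> 2"
    and "m > max (q ^ (h - 1)) (h * q - 1)"
    and "bij (linpoly q h f)"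
    and "bij (linpoly q h g)"
    and "prop_m m (linpoly q h f) (linpoly q h g)"
  shows "card {i. i < h \<and> f i = 0} = card {i. i < h \<and> g i = 0}
         \<and> card {i. i < h \<and> f i = 0} \<ge> 1"
proof -
  note pp = assms(1) and cardK = assms(2) and h2 = assms(3) and mb = assms(4)
    and bF = assms(5) and bG = assms(6) and pm = assms(7)
  obtain p k where p: "prime p" "k > 0" "q = p ^ k" using pp unfolding primepow_def by blast
  have fin: "finite (UNIV :: 'a set)" by simp
  have cp: "prime CHAR('a)" using prime_CHAR_semidom[OF finite_imp_CHAR_pos[OF fin]] .
  have "CHAR('a) dvd card (UNIV :: 'a set)" by (rule CHAR_dvd_CARD)
  then have "CHAR('a) dvd p ^ (k * h)" using cardK p(3) by (simp add: power_mult)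
  then have "CHAR('a) dvd p" using cp prime_dvd_power by blast
  then have cpe: "CHAR('a) = p" using cp p(1) primes_dvd_imp_eq by blast
  have frobq: "(x + y) ^ q = x ^ q + y ^ q" for x y :: 'a
    using freshmans_dream'[OF cp, of q k x y] p(3) cpe by simp
  have q2: "q \<ge> 2"
  proof -
    have "p \<ge> 2" using p(1) prime_ge_2_nat by blast
    moreover have "p ^ 1 \<le> p ^ k" using p(2) \<open>p \<ge> 2\<close> by (intro power_increasing) auto
    ultimately show ?thesis using p(3) by simp
  qed
  have hpos: "0 < h" using h2 by simp
  obtain a b c :: "nat \<Rightarrow> 'a" where
    abc1: "(a 0, b 0, c 0) = (1, 1, 1)" and
    nz: "\<forall>j<m. a j \<noteq> 0 \<and> b j \<noteq> 0 \<and> c j \<noteq> 0" and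
    tr: "\<forall>j<m. \<forall>x. a j * linpoly q h f (b j * inv_into UNIV (linpoly q h f) x)
                  = linpoly q h g (c j * inv_into UNIV (linpoly q h g) x)" and
    dist: "\<forall>i<m. \<forall>j<m. i \<noteq> j \<longrightarrow> a i \<noteq> a j \<and> b i \<noteq> b j \<and> c i \<noteq> c j"
    using pm unfolding prop_m_def by blast
  interpret L1: LP2 q h "TYPE('a)" f g
    by unfold_locales (use q2 hpos cardK frobq bF bG in auto)
  interpret L2: LP2 q h "TYPE('a)" g f
    by unfold_locales (use q2 hpos cardK frobq bF bG in auto)
  have m1: "q ^ (h - 1) < m" using mb by simp
  have injb: "inj_on b {..<m}" using dist by (auto simp: inj_on_def)
  have injc: "inj_on c {..<m}" using dist by (auto simp: inj_on_def)
  have inja: "inj_on a {..<m}" using dist by (auto simp: inj_on_def)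
  have le1: "card {i. i < h \<and> g i = 0} \<le> card {i. i < h \<and> f i = 0}"
    by (rule L1.zeros_le[OF m1 injb]) (use nz tr in auto)
  have tr2: "\<forall>j<m. \<forall>x. inverse (a j) * linpoly q h g (c j * inv_into UNIV (linpoly q h g) x)
                  = linpoly q h f (b j * inv_into UNIV (linpoly q h f) x)"
  proof (intro allI impI)
    fix j x assume j: "j < m"
    have "a j * linpoly q h f (b j * inv_into UNIV (linpoly q h f) x)
                  = linpoly q h g (c j * inv_into UNIV (linpoly q h g) x)"
      using tr j by blast
    moreover have aj: "a j \<noteq> 0" using nz j by blast
    ultimately show "inverse (a j) * linpoly q h g (c j * inv_into UNIV (linpoly q h g) x)
                  = linpoly q h f (b j * inv_into UNIV (linpoly q h f) x)"
      by (simp add: field_simps)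
  qed
  have le2: "card {i. i < h \<and> f i = 0} \<le> card {i. i < h \<and> g i = 0}"
    by (rule L2.zeros_le[OF m1 injc _ tr2]) (use nz in auto)
  have eq: "card {i. i < h \<and> f i = 0} = card {i. i < h \<and> g i = 0}" using le1 le2 by simp
  moreover have "card {i. i < h \<and> f i = 0} \<ge> 1"
  proof (rule ccontr)
    assume "\<not> card {i. i < h \<and> f i = 0} \<ge> 1"
    then have c0: "card {i. i < h \<and> f i = 0} = 0" by linarith
    have finf: "finite {i. i < h \<and> f i = 0}" by (rule finite_subset[of _ "{..<h}"]) auto
    have fing: "finite {i. i < h \<and> g i = 0}" by (rule finite_subset[of _ "{..<h}"]) auto
    have "{i. i < h \<and> f i = 0} = {}" using c0 finf by simp
    then have fz: "\<And>k. k < h \<Longrightarrow> f k \<noteq> 0" by blast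
    have "{i. i < h \<and> g i = 0} = {}" using c0 eq fing by simp
    then have gz: "\<And>k. k < h \<Longrightarrow> g k \<noteq> 0" by blast
    interpret L3: LP3 q h "TYPE('a)" f g
      by unfold_locales (use fz gz h2 in auto)
    have "m \<le> h * (q - 1)"
      by (rule L3.count_bound[OF inja]) (use nz tr in auto)
    moreover have "h * (q - 1) \<le> h * q - 1" using hpos by (simp add: diff_mult_distrib2)
    ultimately show False using mb by simp
  qed
  ultimately show ?thesis by simp
qed

end
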